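(* The pair of varieties $(\mathrm{RB}\,\mathrm{As},\mathrm{pre}\,\mathrm{As})$, with the functor $\psi$ described below, is not a PBW-pair.
   Context: $\mathrm{RB}\,\mathrm{As}$ is the variety of associative algebras with a Rota–Baxter operator of weight $0$ (a linear map $R$ with $R(x)R(y)=R(R(x)y+xR(y))$); $\mathrm{pre}\,\mathrm{As}$ is the variety of preassociative algebras (vector spaces with bilinear $\succ,\prec$ satisfying $(x_1\succ x_2+x_1\prec x_2)\succ x_3 = x_1\succ (x_2 \succ x_3)$, $(x_1\succ x_2)\prec x_3=x_1\succ(x_2\prec x_3)$, $x_1\prec(x_2\succ x_3+x_2\prec x_3)=(x_1\prec x_2)\prec x_3$). The functor $\psi:\mathrm{RB}\,\mathrm{As}\to\mathrm{pre}\,\mathrm{As}$ sends an RB-algebra $(B,R)$ to the same space with $x\succ y=R(x)y$, $x\prec y=xR(y)$. Its left adjoint gives the universal enveloping RB-algebra $U(A)$ of a preassociative algebra $A$. A pair of varieties $(\mathcal V,\mathcal W)$ with such a functor $\psi$ (preserving the underlying space and changing operations) is a PBW-pair (in the sense of Mikhalev–Shestakov) if for every $A\in\mathcal W$ the associated graded algebra $\mathrm{gr}\,U(A)$ with respect to the natural ascending filtration of $U(A)$ is isomorphic to $U(\mathrm{Ab}\,A)$, where $\mathrm{Ab}\,A$ denotes the space $A$ with all operations zero. *)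

theory Defs
  imports Main
begin

record ('k, 'a) vsp =
  carr :: "'a set"
  zer  :: 'a
  pls  :: "'a \<Rightarrow> 'a \<Rightarrow> 'a"
  scl  :: "'k \<Rightarrow> 'a \<Rightarrow> 'a"

record ('k, 'a) prealg = "('k, 'a) vsp" +
  succ_op :: "'a \<Rightarrow> 'a \<Rightarrow> 'a"
  prec_op :: "'a \<Rightarrow> 'a \<Rightarrow> 'a"

record ('k, 'a) rbalg = "('k, 'a) vsp" +
  mul :: "'a \<Rightarrow> 'a \<Rightarrow> 'a"
  rbo :: "'a \<Rightarrow> 'a"

definition vspace :: "('k::field, 'a, 'z) vsp_scheme \<Rightarrow> bool" where
  "vspace V \<longleftrightarrow>
     zer V \<in> carr V \<and>
     (\<forall>x\<in>carr V. \<forall>y\<in>carr V. pls V x y \<in> carr V) \<and>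
     (\<forall>c. \<forall>x\<in>carr V. scl V c x \<in> carr V) \<and>
     (\<forall>x\<in>carr V. \<forall>y\<in>carr V. \<forall>z\<in>carr V. pls V (pls V x y) z = pls V x (pls V y z)) \<and>
     (\<forall>x\<in>carr V. \<forall>y\<in>carr V. pls V x y = pls V y x) \<and>
     (\<forall>x\<in>carr V. pls V (zer V) x = x) \<and>
     (\<forall>x\<in>carr V. \<exists>y\<in>carr V. pls V x y = zer V) \<and>
     (\<forall>x\<in>carr V. scl V 1 x = x) \<and>
     (\<forall>a b. \<forall>x\<in>carr V. scl V a (scl V b x) = scl V (a * b) x) \<and>
     (\<forall>a. \<forall>x\<in>carr V. \<forall>y\<in>carr V. scl V a (pls V x y) = pls V (scl V a x) (scl V a y)) \<and>
     (\<forall>a b. \<forall>x\<in>carr V. scl V (a + b) x = pls V (scl V a x) (scl V b x))"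

definition bilinear_on :: "('k::field, 'a, 'z) vsp_scheme \<Rightarrow> ('a \<Rightarrow> 'a \<Rightarrow> 'a) \<Rightarrow> bool" where
  "bilinear_on V f \<longleftrightarrow>
     (\<forall>x\<in>carr V. \<forall>y\<in>carr V. f x y \<in> carr V) \<and>
     (\<forall>x\<in>carr V. \<forall>y\<in>carr V. \<forall>z\<in>carr V. f (pls V x y) z = pls V (f x z) (f y z)) \<and>
     (\<forall>x\<in>carr V. \<forall>y\<in>carr V. \<forall>z\<in>carr V. f z (pls V x y) = pls V (f z x) (f z y)) \<and>
     (\<forall>c. \<forall>x\<in>carr V. \<forall>y\<in>carr V. f (scl V c x) y = scl V c (f x y)) \<and>
     (\<forall>c. \<forall>x\<in>carr V. \<forall>y\<in>carr V. f x (scl V c y) = scl V c (f x y))"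

definition is_preas :: "('k::field, 'a, 'z) prealg_scheme \<Rightarrow> bool" where
  "is_preas A \<longleftrightarrow> vspace A \<and> bilinear_on A (succ_op A) \<and> bilinear_on A (prec_op A) \<and>
    (\<forall>x1\<in>carr A. \<forall>x2\<in>carr A. \<forall>x3\<in>carr A.
       succ_op A (pls A (succ_op A x1 x2) (prec_op A x1 x2)) x3 = succ_op A x1 (succ_op A x2 x3) \<and>
       prec_op A (succ_op A x1 x2) x3 = succ_op A x1 (prec_op A x2 x3) \<and>
       prec_op A x1 (pls A (succ_op A x2 x3) (prec_op A x2 x3)) = prec_op A (prec_op A x1 x2) x3)"

definition is_rbas :: "('k::field, 'a, 'z) rbalg_scheme \<Rightarrow> bool" where
  "is_rbas B \<longleftrightarrow> vspace B \<and> bilinear_on B (mul B) \<and>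
    (\<forall>x\<in>carr B. \<forall>y\<in>carr B. \<forall>z\<in>carr B. mul B (mul B x y) z = mul B x (mul B y z)) \<and>
    (\<forall>x\<in>carr B. rbo B x \<in> carr B) \<and>
    (\<forall>x\<in>carr B. \<forall>y\<in>carr B. rbo B (pls B x y) = pls B (rbo B x) (rbo B y)) \<and>
    (\<forall>c. \<forall>x\<in>carr B. rbo B (scl B c x) = scl B c (rbo B x)) \<and>
    (\<forall>x\<in>carr B. \<forall>y\<in>carr B.
       mul B (rbo B x) (rbo B y) = rbo B (pls B (mul B (rbo B x) y) (mul B x (rbo B y))))"

definition rb_iso :: "('k, 'a) rbalg \<Rightarrow> ('k, 'b) rbalg \<Rightarrow> bool" where
  "rb_iso B C \<longleftrightarrow> (\<exists>\<phi>. bij_betw \<phi> (carr B) (carr C) \<and>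
     (\<forall>x\<in>carr B. \<forall>y\<in>carr B. \<phi> (pls B x y) = pls C (\<phi> x) (\<phi> y)) \<and>
     (\<forall>c. \<forall>x\<in>carr B. \<phi> (scl B c x) = scl C c (\<phi> x)) \<and>
     (\<forall>x\<in>carr B. \<forall>y\<in>carr B. \<phi> (mul B x y) = mul C (\<phi> x) (\<phi> y)) \<and>
     (\<forall>x\<in>carr B. \<phi> (rbo B x) = rbo C (\<phi> x)))"

definition Ab :: "('k, 'a) prealg \<Rightarrow> ('k, 'a) prealg" where
  "Ab A = A\<lparr>succ_op := (\<lambda>x y. zer A), prec_op := (\<lambda>x y. zer A)\<rparr>"

section \<open>Universal enveloping RB-algebra U(A), by generators and relations\<close>

datatype ('k, 'a) tm =
    G 'a | Z | Pl "('k, 'a) tm" "('k, 'a) tm" | Sc 'k "('k, 'a) tm"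
  | Mu "('k, 'a) tm" "('k, 'a) tm" | Rt "('k, 'a) tm"

inductive_set terms :: "('k, 'a) prealg \<Rightarrow> ('k, 'a) tm set" for A where
  "x \<in> carr A \<Longrightarrow> G x \<in> terms A"
| "Z \<in> terms A"
| "s \<in> terms A \<Longrightarrow> t \<in> terms A \<Longrightarrow> Pl s t \<in> terms A"
| "t \<in> terms A \<Longrightarrow> Sc c t \<in> terms A"
| "s \<in> terms A \<Longrightarrow> t \<in> terms A \<Longrightarrow> Mu s t \<in> terms A"
| "t \<in> terms A \<Longrightarrow> Rt t \<in> terms A"

text \<open>The smallest congruence on terms containing the axioms of RB As and the defining
  relations of U(A): the generators form a copy of the space A, and
  R(x)y = x \<succ> y, x R(y) = x \<prec> y for x, y in A.\<close>
inductive_set rbc :: "('k::field, 'a) prealg \<Rightarrow> (('k, 'a) tm \<times> ('k, 'a) tm) set" for A where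
  refl: "t \<in> terms A \<Longrightarrow> (t, t) \<in> rbc A"
| sym: "(s, t) \<in> rbc A \<Longrightarrow> (t, s) \<in> rbc A"
| trans: "(s, t) \<in> rbc A \<Longrightarrow> (t, u) \<in> rbc A \<Longrightarrow> (s, u) \<in> rbc A"
| cPl: "(s, s') \<in> rbc A \<Longrightarrow> (t, t') \<in> rbc A \<Longrightarrow> (Pl s t, Pl s' t') \<in> rbc A"
| cSc: "(s, s') \<in> rbc A \<Longrightarrow> (Sc c s, Sc c s') \<in> rbc A"
| cMu: "(s, s') \<in> rbc A \<Longrightarrow> (t, t') \<in> rbc A \<Longrightarrow> (Mu s t, Mu s' t') \<in> rbc A"
| cRt: "(s, s') \<in> rbc A \<Longrightarrow> (Rt s, Rt s') \<in> rbc A"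
| pl_assoc: "s \<in> terms A \<Longrightarrow> t \<in> terms A \<Longrightarrow> u \<in> terms A \<Longrightarrow> (Pl (Pl s t) u, Pl s (Pl t u)) \<in> rbc A"
| pl_comm: "s \<in> terms A \<Longrightarrow> t \<in> terms A \<Longrightarrow> (Pl s t, Pl t s) \<in> rbc A"
| pl_zero: "t \<in> terms A \<Longrightarrow> (Pl Z t, t) \<in> rbc A"
| pl_neg: "t \<in> terms A \<Longrightarrow> (Pl t (Sc (-1) t), Z) \<in> rbc A"
| sc_one: "t \<in> terms A \<Longrightarrow> (Sc 1 t, t) \<in> rbc A"
| sc_mult: "t \<in> terms A \<Longrightarrow> (Sc a (Sc b t), Sc (a * b) t) \<in> rbc A"
| sc_dist1: "s \<in> terms A \<Longrightarrow> t \<in> terms A \<Longrightarrow> (Sc a (Pl s t), Pl (Sc a s) (Sc a t)) \<in> rbc A"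
| sc_dist2: "t \<in> terms A \<Longrightarrow> (Sc (a + b) t, Pl (Sc a t) (Sc b t)) \<in> rbc A"
| mu_distl: "s \<in> terms A \<Longrightarrow> t \<in> terms A \<Longrightarrow> u \<in> terms A \<Longrightarrow> (Mu (Pl s t) u, Pl (Mu s u) (Mu t u)) \<in> rbc A"
| mu_distr: "s \<in> terms A \<Longrightarrow> t \<in> terms A \<Longrightarrow> u \<in> terms A \<Longrightarrow> (Mu u (Pl s t), Pl (Mu u s) (Mu u t)) \<in> rbc A"
| mu_scl: "s \<in> terms A \<Longrightarrow> t \<in> terms A \<Longrightarrow> (Mu (Sc a s) t, Sc a (Mu s t)) \<in> rbc A"
| mu_scr: "s \<in> terms A \<Longrightarrow> t \<in> terms A \<Longrightarrow> (Mu s (Sc a t), Sc a (Mu s t)) \<in> rbc A"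
| mu_assoc: "s \<in> terms A \<Longrightarrow> t \<in> terms A \<Longrightarrow> u \<in> terms A \<Longrightarrow> (Mu (Mu s t) u, Mu s (Mu t u)) \<in> rbc A"
| rt_pl: "s \<in> terms A \<Longrightarrow> t \<in> terms A \<Longrightarrow> (Rt (Pl s t), Pl (Rt s) (Rt t)) \<in> rbc A"
| rt_sc: "t \<in> terms A \<Longrightarrow> (Rt (Sc a t), Sc a (Rt t)) \<in> rbc A"
| rt_rb: "s \<in> terms A \<Longrightarrow> t \<in> terms A \<Longrightarrow>
           (Mu (Rt s) (Rt t), Rt (Pl (Mu (Rt s) t) (Mu s (Rt t)))) \<in> rbc A"
| g_pl: "x \<in> carr A \<Longrightarrow> y \<in> carr A \<Longrightarrow> (G (pls A x y), Pl (G x) (G y)) \<in> rbc A"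
| g_sc: "x \<in> carr A \<Longrightarrow> (G (scl A c x), Sc c (G x)) \<in> rbc A"
| g_succ: "x \<in> carr A \<Longrightarrow> y \<in> carr A \<Longrightarrow> (Mu (Rt (G x)) (G y), G (succ_op A x y)) \<in> rbc A"
| g_prec: "x \<in> carr A \<Longrightarrow> y \<in> carr A \<Longrightarrow> (Mu (G x) (Rt (G y)), G (prec_op A x y)) \<in> rbc A"

definition rep :: "'x set \<Rightarrow> 'x" where "rep X = (SOME x. x \<in> X)"

definition UE :: "('k::field, 'a) prealg \<Rightarrow> ('k, ('k, 'a) tm set) rbalg" where
  "UE A = \<lparr> carr = terms A // rbc A,
            zer = rbc A `` {Z},
            pls = (\<lambda>X Y. rbc A `` {Pl (rep X) (rep Y)}),
            scl = (\<lambda>c X. rbc A `` {Sc c (rep X)}),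
            mul = (\<lambda>X Y. rbc A `` {Mu (rep X) (rep Y)}),
            rbo = (\<lambda>X. rbc A `` {Rt (rep X)}) \<rparr>"

section \<open>The natural filtration of U(A) and the associated graded algebra\<close>

fun deg :: "('k, 'a) tm \<Rightarrow> nat" where
  "deg (G x) = 1"
| "deg Z = 0"
| "deg (Pl s t) = max (deg s) (deg t)"
| "deg (Sc c t) = deg t"
| "deg (Mu s t) = deg s + deg t"
| "deg (Rt t) = deg t"

text \<open>U_n: the span of RB-monomials of degree at most n in elements of A.\<close>
definition filt :: "('k::field, 'a) prealg \<Rightarrow> nat \<Rightarrow> ('k, 'a) tm set set" where
  "filt A n = {X \<in> carr (UE A). \<exists>t\<in>X. deg t \<le> n}"

text \<open>U_{n-1}, with the convention U_{-1} = 0.\<close>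
definition filt_below :: "('k::field, 'a) prealg \<Rightarrow> nat \<Rightarrow> ('k, 'a) tm set set" where
  "filt_below A n = (if n = 0 then {zer (UE A)} else filt A (n - 1))"

text \<open>An element of gr U(A) = (direct sum over n of U_n / U_{n-1}) is represented by a family
  of terms f n whose class lies in U_n, only finitely many of them not in U_{n-1}.\<close>
definition gr_reps :: "('k::field, 'a) prealg \<Rightarrow> (nat \<Rightarrow> ('k, 'a) tm) set" where
  "gr_reps A = {f. (\<forall>n. f n \<in> terms A \<and> rbc A `` {f n} \<in> filt A n) \<and>
                   finite {n. rbc A `` {f n} \<notin> filt_below A n}}"

definition gr_rel :: "('k::field, 'a) prealg \<Rightarrow> ((nat \<Rightarrow> ('k, 'a) tm) \<times> (nat \<Rightarrow> ('k, 'a) tm)) set" where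
  "gr_rel A = {(f, g). f \<in> gr_reps A \<and> g \<in> gr_reps A \<and>
                 (\<forall>n. rbc A `` {Pl (f n) (Sc (-1) (g n))} \<in> filt_below A n)}"

definition sumt :: "('k, 'a) tm list \<Rightarrow> ('k, 'a) tm" where
  "sumt ts = foldr Pl ts Z"

definition GR :: "('k::field, 'a) prealg \<Rightarrow> ('k, (nat \<Rightarrow> ('k, 'a) tm) set) rbalg" where
  "GR A = \<lparr> carr = gr_reps A // gr_rel A,
            zer = gr_rel A `` {\<lambda>n. Z},
            pls = (\<lambda>X Y. gr_rel A `` {\<lambda>n. Pl (rep X n) (rep Y n)}),
            scl = (\<lambda>c X. gr_rel A `` {\<lambda>n. Sc c (rep X n)}),
            mul = (\<lambda>X Y. gr_rel A `` {\<lambda>n. sumt (map (\<lambda>i. Mu (rep X i) (rep Y (n - i))) [0..<Suc n])}),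
            rbo = (\<lambda>X. gr_rel A `` {\<lambda>n. Rt (rep X n)}) \<rparr>"

text \<open>PBW property of the pair (RB As, pre As) for preassociative algebras whose underlying
  set lives in the type 'a.\<close>
definition PBW_RBAs_preAs :: "('k::field, 'a) prealg itself \<Rightarrow> bool" where
  "PBW_RBAs_preAs _ \<longleftrightarrow> (\<forall>A :: ('k, 'a) prealg. is_preas A \<longrightarrow> rb_iso (GR A) (UE (Ab A)))"

end

theory Submission
  imports Defs
begin


definition A0 :: "('k::field, nat \<Rightarrow> 'k) prealg" where
  "A0 = \<lparr>carr = UNIV, zer = (\<lambda>n. 0), pls = (\<lambda>x y n. x n + y n), scl = (\<lambda>c x n. c * x n),
         succ_op = (\<lambda>x y n. x n * y n), prec_op = (\<lambda>x y n. 0)\<rparr>"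

lemma carr_A0[simp]: "carr A0 = UNIV" by (simp add: A0_def)

lemma terms_A0[simp]: "t \<in> terms (A0::('k::field, nat \<Rightarrow> 'k) prealg)"
  by (induction t) (auto intro: terms.intros)

definition E :: "('k::field, nat \<Rightarrow> 'k) tm \<Rightarrow> ('k, nat \<Rightarrow> 'k) tm \<Rightarrow> bool" where
  "E s t \<longleftrightarrow> (s, t) \<in> rbc (A0::('k, nat \<Rightarrow> 'k) prealg)"

abbreviation neg :: "('k::field, 'a) tm \<Rightarrow> ('k, 'a) tm" where "neg t \<equiv> Sc (-1) t"

lemma E_refl[simp]: "E t t" unfolding E_def by (rule rbc.refl) simp
lemma E_sym: "E s t \<Longrightarrow> E t s" unfolding E_def by (rule rbc.sym)
lemma E_trans[trans]: "E s t \<Longrightarrow> E t u \<Longrightarrow> E s u" unfolding E_def by (rule rbc.trans)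
lemma E_eq_trans[trans]: "E s t \<Longrightarrow> t = u \<Longrightarrow> E s u" by simp
lemma E_Pl: "E s s' \<Longrightarrow> E t t' \<Longrightarrow> E (Pl s t) (Pl s' t')" unfolding E_def by (rule rbc.cPl)
lemma E_Sc: "E s s' \<Longrightarrow> E (Sc c s) (Sc c s')" unfolding E_def by (rule rbc.cSc)
lemma E_Mu: "E s s' \<Longrightarrow> E t t' \<Longrightarrow> E (Mu s t) (Mu s' t')" unfolding E_def by (rule rbc.cMu)
lemma E_Rt: "E s s' \<Longrightarrow> E (Rt s) (Rt s')" unfolding E_def by (rule rbc.cRt)
lemma E_assoc: "E (Pl (Pl s t) u) (Pl s (Pl t u))" unfolding E_def by (rule rbc.pl_assoc) simp_all
lemma E_comm: "E (Pl s t) (Pl t s)" unfolding E_def by (rule rbc.pl_comm) simp_all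
lemma E_zero: "E (Pl Z t) t" unfolding E_def by (rule rbc.pl_zero) simp
lemma E_negr: "E (Pl t (neg t)) Z" unfolding E_def by (rule rbc.pl_neg) simp
lemma E_sc1: "E (Sc 1 t) t" unfolding E_def by (rule rbc.sc_one) simp
lemma E_scm: "E (Sc a (Sc b t)) (Sc (a*b) t)" unfolding E_def by (rule rbc.sc_mult) simp
lemma E_scd1: "E (Sc a (Pl s t)) (Pl (Sc a s) (Sc a t))" unfolding E_def by (rule rbc.sc_dist1) simp_all
lemma E_scd2: "E (Sc (a+b) t) (Pl (Sc a t) (Sc b t))" unfolding E_def by (rule rbc.sc_dist2) simp
lemma E_mdl: "E (Mu (Pl s t) u) (Pl (Mu s u) (Mu t u))" unfolding E_def by (rule rbc.mu_distl) simp_all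
lemma E_mdr: "E (Mu u (Pl s t)) (Pl (Mu u s) (Mu u t))" unfolding E_def by (rule rbc.mu_distr) simp_all
lemma E_mscl: "E (Mu (Sc a s) t) (Sc a (Mu s t))" unfolding E_def by (rule rbc.mu_scl) simp_all
lemma E_mscr: "E (Mu s (Sc a t)) (Sc a (Mu s t))" unfolding E_def by (rule rbc.mu_scr) simp_all
lemma E_massoc: "E (Mu (Mu s t) u) (Mu s (Mu t u))" unfolding E_def by (rule rbc.mu_assoc) simp_all
lemma E_rtpl: "E (Rt (Pl s t)) (Pl (Rt s) (Rt t))" unfolding E_def by (rule rbc.rt_pl) simp_all
lemma E_rtsc: "E (Rt (Sc a t)) (Sc a (Rt t))" unfolding E_def by (rule rbc.rt_sc) simp

lemma E_gsucc: "E (Mu (Rt (G x)) (G y)) (G (succ_op A0 x y))" unfolding E_def by (rule rbc.g_succ) simp_all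
lemma E_gprec: "E (Mu (G x) (Rt (G y))) (G (prec_op A0 x y))" unfolding E_def by (rule rbc.g_prec) simp_all
lemma E_gsc: "E (G (scl A0 c x)) (Sc c (G x))" unfolding E_def by (rule rbc.g_sc) simp

lemma E_zero_r: "E (Pl t Z) t"
proof -
  have "E (Pl t Z) (Pl Z t)" by (rule E_comm)
  also have "E \<dots> t" by (rule E_zero)
  finally show ?thesis .
qed

lemma E_idem: assumes "E (Pl x x) x" shows "E x Z"
proof -
  have "E x (Pl Z x)" by (rule E_sym[OF E_zero])
  also have "E \<dots> (Pl x Z)" by (rule E_comm)
  also have "E \<dots> (Pl x (Pl x (neg x)))" by (rule E_Pl[OF E_refl E_sym[OF E_negr]])
  also have "E \<dots> (Pl (Pl x x) (neg x))" by (rule E_sym[OF E_assoc])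
  also have "E \<dots> (Pl x (neg x))" by (rule E_Pl[OF assms E_refl])
  also have "E \<dots> Z" by (rule E_negr)
  finally show ?thesis .
qed

lemma E_ScZ: "E (Sc c Z) Z"
proof (rule E_idem)
  have "E (Pl (Sc c Z) (Sc c Z)) (Sc c (Pl Z Z))" by (rule E_sym[OF E_scd1])
  also have "E \<dots> (Sc c Z)" by (rule E_Sc[OF E_zero])
  finally show "E (Pl (Sc c Z) (Sc c Z)) (Sc c Z)" .
qed

lemma E_MuZl: "E (Mu Z t) Z"
proof (rule E_idem)
  have "E (Pl (Mu Z t) (Mu Z t)) (Mu (Pl Z Z) t)" by (rule E_sym[OF E_mdl])
  also have "E \<dots> (Mu Z t)" by (rule E_Mu[OF E_zero E_refl])
  finally show "E (Pl (Mu Z t) (Mu Z t)) (Mu Z t)" .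
qed

lemma E_MuZr: "E (Mu t Z) Z"
proof (rule E_idem)
  have "E (Pl (Mu t Z) (Mu t Z)) (Mu t (Pl Z Z))" by (rule E_sym[OF E_mdr])
  also have "E \<dots> (Mu t Z)" by (rule E_Mu[OF E_refl E_zero])
  finally show "E (Pl (Mu t Z) (Mu t Z)) (Mu t Z)" .
qed

lemma E_RtZ: "E (Rt Z) Z"
proof (rule E_idem)
  have "E (Pl (Rt Z) (Rt Z)) (Rt (Pl Z Z))" by (rule E_sym[OF E_rtpl])
  also have "E \<dots> (Rt Z)" by (rule E_Rt[OF E_zero])
  finally show "E (Pl (Rt Z) (Rt Z)) (Rt Z)" .
qed

lemma E_Sc0: "E (Sc 0 t) Z"
proof (rule E_idem)
  have "E (Pl (Sc 0 t) (Sc 0 t)) (Sc (0+0) t)" by (rule E_sym[OF E_scd2])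
  also have "Sc (0+0) t = Sc 0 t" by simp
  finally show "E (Pl (Sc 0 t) (Sc 0 t)) (Sc 0 t)" .
qed

lemma E_ac4: "E (Pl (Pl a b) (Pl c d)) (Pl (Pl a c) (Pl b d))"
proof -
  have "E (Pl (Pl a b) (Pl c d)) (Pl a (Pl b (Pl c d)))" by (rule E_assoc)
  also have "E \<dots> (Pl a (Pl (Pl b c) d))" by (rule E_Pl[OF E_refl E_sym[OF E_assoc]])
  also have "E \<dots> (Pl a (Pl (Pl c b) d))" by (rule E_Pl[OF E_refl E_Pl[OF E_comm E_refl]])
  also have "E \<dots> (Pl a (Pl c (Pl b d)))" by (rule E_Pl[OF E_refl E_assoc])
  also have "E \<dots> (Pl (Pl a c) (Pl b d))" by (rule E_sym[OF E_assoc])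
  finally show ?thesis .
qed

lemma E_negl: "E (Pl (neg q) q) Z"
  using E_trans[OF E_comm E_negr] .

lemma E_cancel: "E (Pl (Pl p (neg q)) (Pl q (neg r))) (Pl p (neg r))"
proof -
  have "E (Pl (Pl p (neg q)) (Pl q (neg r))) (Pl p (Pl (neg q) (Pl q (neg r))))" by (rule E_assoc)
  also have "E \<dots> (Pl p (Pl (Pl (neg q) q) (neg r)))" by (rule E_Pl[OF E_refl E_sym[OF E_assoc]])
  also have "E \<dots> (Pl p (Pl Z (neg r)))" by (rule E_Pl[OF E_refl E_Pl[OF E_negl E_refl]])
  also have "E \<dots> (Pl p (neg r))" by (rule E_Pl[OF E_refl E_zero])
  finally show ?thesis .
qed

lemma E_back: "E (Pl (Pl p (neg q)) q) p"
proof -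
  have "E (Pl (Pl p (neg q)) q) (Pl p (Pl (neg q) q))" by (rule E_assoc)
  also have "E \<dots> (Pl p Z)" by (rule E_Pl[OF E_refl E_negl])
  also have "E \<dots> p" by (rule E_zero_r)
  finally show ?thesis .
qed

lemma E_negdiff: "E (neg (Pl p (neg q))) (Pl q (neg p))"
proof -
  have "E (neg (Pl p (neg q))) (Pl (neg p) (neg (neg q)))" by (rule E_scd1)
  also have "E \<dots> (Pl (neg p) (Sc ((-1) * (-1)) q))" by (rule E_Pl[OF E_refl E_scm])
  also have "Sc ((-1) * (-1)) q = Sc 1 q" by simp
  also have "E (Pl (neg p) (Sc 1 q)) (Pl (neg p) q)" by (rule E_Pl[OF E_refl E_sc1])
  also have "E \<dots> (Pl q (neg p))" by (rule E_comm)
  finally show ?thesis .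
qed

lemma E_scdiff: "E (Pl (Sc c p) (neg (Sc c q))) (Sc c (Pl p (neg q)))"
proof -
  have "E (Sc c (Pl p (neg q))) (Pl (Sc c p) (Sc c (neg q)))" by (rule E_scd1)
  also have "E \<dots> (Pl (Sc c p) (Sc (c * -1) q))" by (rule E_Pl[OF E_refl E_scm])
  also have "Sc (c * -1) q = Sc (-1 * c) q" by simp
  also have "E (Pl (Sc c p) (Sc (-1 * c) q)) (Pl (Sc c p) (neg (Sc c q)))" by (rule E_Pl[OF E_refl E_sym[OF E_scm]])
  finally show ?thesis by (rule E_sym)
qed

lemma E_rtdiff: "E (Pl (Rt p) (neg (Rt q))) (Rt (Pl p (neg q)))"
proof -
  have "E (Rt (Pl p (neg q))) (Pl (Rt p) (Rt (neg q)))" by (rule E_rtpl)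
  also have "E \<dots> (Pl (Rt p) (neg (Rt q)))" by (rule E_Pl[OF E_refl E_rtsc])
  finally show ?thesis by (rule E_sym)
qed

lemma E_pldiff: "E (Pl (Pl p q) (neg (Pl p' q'))) (Pl (Pl p (neg p')) (Pl q (neg q')))"
proof -
  have "E (Pl (Pl p q) (neg (Pl p' q'))) (Pl (Pl p q) (Pl (neg p') (neg q')))" by (rule E_Pl[OF E_refl E_scd1])
  also have "E \<dots> (Pl (Pl p (neg p')) (Pl q (neg q')))" by (rule E_ac4)
  finally show ?thesis .
qed

lemma E_mudiff: "E (Pl (Mu p q) (neg (Mu p' q'))) (Pl (Mu (Pl p (neg p')) q) (Mu p' (Pl q (neg q'))))"
proof -
  have 1: "E (Mu (Pl p (neg p')) q) (Pl (Mu p q) (neg (Mu p' q)))"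
  proof -
    have "E (Mu (Pl p (neg p')) q) (Pl (Mu p q) (Mu (neg p') q))" by (rule E_mdl)
    also have "E \<dots> (Pl (Mu p q) (neg (Mu p' q)))" by (rule E_Pl[OF E_refl E_mscl])
    finally show ?thesis .
  qed
  have 2: "E (Mu p' (Pl q (neg q'))) (Pl (Mu p' q) (neg (Mu p' q')))"
  proof -
    have "E (Mu p' (Pl q (neg q'))) (Pl (Mu p' q) (Mu p' (neg q')))" by (rule E_mdr)
    also have "E \<dots> (Pl (Mu p' q) (neg (Mu p' q')))" by (rule E_Pl[OF E_refl E_mscr])
    finally show ?thesis .
  qed
  have "E (Pl (Mu (Pl p (neg p')) q) (Mu p' (Pl q (neg q'))))
          (Pl (Pl (Mu p q) (neg (Mu p' q))) (Pl (Mu p' q) (neg (Mu p' q'))))" by (rule E_Pl[OF 1 2])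
  also have "E \<dots> (Pl (Mu p q) (neg (Mu p' q')))" by (rule E_cancel)
  finally show ?thesis by (rule E_sym)
qed

lemma E_GG: "E (Mu (G x) (G y)) Z"
proof -
  define u :: "nat \<Rightarrow> 'a" where "u = (\<lambda>n. 1)"
  have s: "succ_op A0 u y = y" by (simp add: A0_def u_def)
  have p: "prec_op A0 x u = scl A0 0 x" by (simp add: A0_def)
  have "E (Mu (G x) (G y)) (Mu (G x) (Mu (Rt (G u)) (G y)))"
    using E_Mu[OF E_refl E_sym[OF E_gsucc[of u y]]] s by simp
  also have "E \<dots> (Mu (Mu (G x) (Rt (G u))) (G y))" by (rule E_sym[OF E_massoc])
  also have "E \<dots> (Mu (G (prec_op A0 x u)) (G y))" by (rule E_Mu[OF E_gprec E_refl])
  also have "E \<dots> (Mu (Sc 0 (G x)) (G y))" unfolding p by (rule E_Mu[OF E_gsc E_refl])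
  also have "E \<dots> (Mu Z (G y))" by (rule E_Mu[OF E_Sc0 E_refl])
  also have "E \<dots> Z" by (rule E_MuZl)
  finally show ?thesis .
qed



definition Fd :: "nat \<Rightarrow> ('k::field, nat \<Rightarrow> 'k) tm \<Rightarrow> bool" where
  "Fd n t \<longleftrightarrow> (\<exists>t'. E t t' \<and> deg t' \<le> n)"

definition Ld :: "nat \<Rightarrow> ('k::field, nat \<Rightarrow> 'k) tm \<Rightarrow> bool" where
  "Ld n t \<longleftrightarrow> (if n = 0 then E t Z else Fd (n - 1) t)"

definition D :: "nat \<Rightarrow> ('k::field, nat \<Rightarrow> 'k) tm \<Rightarrow> ('k, nat \<Rightarrow> 'k) tm \<Rightarrow> bool" where
  "D n p q \<longleftrightarrow> Ld n (Pl p (neg q))"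

lemma Fd_E: "Fd n t \<Longrightarrow> E t t2 \<Longrightarrow> Fd n t2"
  unfolding Fd_def by (meson E_sym E_trans)
lemma Ld_E: "Ld n t \<Longrightarrow> E t t2 \<Longrightarrow> Ld n t2"
  unfolding Ld_def by (metis E_sym E_trans Fd_E)
lemma Fd_deg: "deg t \<le> n \<Longrightarrow> Fd n t"
  unfolding Fd_def using E_refl by blast
lemma Fd_mono: "Fd m t \<Longrightarrow> m \<le> n \<Longrightarrow> Fd n t"
  unfolding Fd_def by (meson order_trans)
lemma Fd_Z: "Fd n Z" by (rule Fd_deg) simp
lemma Fd_Pl: "Fd n p \<Longrightarrow> Fd n q \<Longrightarrow> Fd n (Pl p q)"
  unfolding Fd_def by (force intro: E_Pl)
lemma Fd_Sc: "Fd n p \<Longrightarrow> Fd n (Sc c p)"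
  unfolding Fd_def by (force intro: E_Sc)
lemma Fd_Rt: "Fd n p \<Longrightarrow> Fd n (Rt p)"
  unfolding Fd_def by (force intro: E_Rt)
lemma Fd_Mu: "Fd a p \<Longrightarrow> Fd b q \<Longrightarrow> Fd (a+b) (Mu p q)"
  unfolding Fd_def by (force intro: E_Mu add_mono)

lemma Ld_ofZ: "E t Z \<Longrightarrow> Ld n t"
  unfolding Ld_def using Fd_E[OF Fd_Z E_sym] by auto
lemma Ld_Z: "Ld n Z" by (rule Ld_ofZ) simp
lemma Ld_Fd: "Ld n t \<Longrightarrow> Fd n t"
  unfolding Ld_def by (auto split: if_splits intro: Fd_mono Fd_E[OF Fd_Z] E_sym)
lemma Ld_Pl: "Ld n p \<Longrightarrow> Ld n q \<Longrightarrow> Ld n (Pl p q)"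
  unfolding Ld_def by (auto split: if_splits intro: Fd_Pl E_trans[OF E_Pl E_zero])
lemma Ld_Sc: "Ld n p \<Longrightarrow> Ld n (Sc c p)"
  unfolding Ld_def by (auto split: if_splits intro: Fd_Sc E_trans[OF E_Sc E_ScZ])
lemma Ld_Rt: "Ld n p \<Longrightarrow> Ld n (Rt p)"
  unfolding Ld_def by (auto split: if_splits intro: Fd_Rt E_trans[OF E_Rt E_RtZ])
lemma Ld_Mu1: "Ld a p \<Longrightarrow> Fd b q \<Longrightarrow> Ld (a+b) (Mu p q)"
proof (cases "a = 0")
  case True
  assume "Ld a p"
  then have "E p Z" using True by (simp add: Ld_def)
  then have "E (Mu p q) Z" using E_trans[OF E_Mu[OF _ E_refl] E_MuZl] by blast
  then show ?thesis by (rule Ld_ofZ)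
next
  case False
  assume "Ld a p" "Fd b q"
  then have "Fd (a - 1 + b) (Mu p q)" using False Fd_Mu[of "a - 1" p b q] by (simp add: Ld_def)
  moreover have "a - 1 + b = a + b - 1" using False by simp
  ultimately show ?thesis using False by (simp add: Ld_def)
qed
lemma Ld_Mu2: "Fd a p \<Longrightarrow> Ld b q \<Longrightarrow> Ld (a+b) (Mu p q)"
proof (cases "b = 0")
  case True
  assume "Ld b q"
  then have "E q Z" using True by (simp add: Ld_def)
  then have "E (Mu p q) Z" using E_trans[OF E_Mu[OF E_refl] E_MuZr] by blast
  then show ?thesis by (rule Ld_ofZ)
next
  case False
  assume "Fd a p" "Ld b q"
  then have "Fd (a + (b - 1)) (Mu p q)" using False Fd_Mu[of a p "b - 1" q] by (simp add: Ld_def)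
  moreover have "a + (b - 1) = a + b - 1" using False by simp
  ultimately show ?thesis using False by (simp add: Ld_def)
qed

lemma D_refl: "D n p p" unfolding D_def by (rule Ld_ofZ[OF E_negr])
lemma D_of_E: "E p q \<Longrightarrow> D n p q"
  unfolding D_def by (rule Ld_ofZ[OF E_trans[OF E_Pl[OF _ E_refl] E_negr]])
lemma D_sym: "D n p q \<Longrightarrow> D n q p"
  unfolding D_def by (rule Ld_E[OF Ld_Sc E_negdiff])
lemma D_trans: "D n p q \<Longrightarrow> D n q r \<Longrightarrow> D n p r"
  unfolding D_def by (rule Ld_E[OF Ld_Pl E_cancel])
lemma D_Pl: "D n p p' \<Longrightarrow> D n q q' \<Longrightarrow> D n (Pl p q) (Pl p' q')"
  unfolding D_def by (rule Ld_E[OF Ld_Pl E_sym[OF E_pldiff]])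
lemma D_Sc: "D n p p' \<Longrightarrow> D n (Sc c p) (Sc c p')"
  unfolding D_def by (rule Ld_E[OF Ld_Sc E_sym[OF E_scdiff]])
lemma D_Rt: "D n p p' \<Longrightarrow> D n (Rt p) (Rt p')"
  unfolding D_def by (rule Ld_E[OF Ld_Rt E_sym[OF E_rtdiff]])
lemma D_Mu: "D a p p' \<Longrightarrow> Fd b q \<Longrightarrow> Fd a p' \<Longrightarrow> D b q q' \<Longrightarrow> D (a+b) (Mu p q) (Mu p' q')"
  unfolding D_def by (rule Ld_E[OF Ld_Pl[OF Ld_Mu1 Ld_Mu2] E_sym[OF E_mudiff]])
lemma D_Fd: "D n p q \<Longrightarrow> Fd n q \<Longrightarrow> Fd n p"
  unfolding D_def by (rule Fd_E[OF Fd_Pl[OF Ld_Fd] E_back])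
lemma D_Ld: "D n p q \<Longrightarrow> Ld n q \<Longrightarrow> Ld n p"
  unfolding D_def by (rule Ld_E[OF Ld_Pl E_back])
lemma D_ZL: "E p Z \<Longrightarrow> Ld n q \<Longrightarrow> D n p q"
  unfolding D_def by (rule Ld_Pl[OF Ld_ofZ Ld_Sc])



lemma equiv_rbc: "equiv UNIV (rbc (A0::('k::field, nat \<Rightarrow> 'k) prealg))"
  by (rule equivI) (auto simp: refl_on_def sym_def trans_def E_def[symmetric] intro: E_sym E_trans)

lemma mem_cls: "t' \<in> rbc A0 `` {t} \<longleftrightarrow> E t t'" by (simp add: E_def)

lemma cls_eq: "rbc A0 `` {s} = rbc A0 `` {t} \<longleftrightarrow> E s t"
  using eq_equiv_class_iff[OF equiv_rbc] by (simp add: E_def)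

lemma cls_carr: "rbc A0 `` {t} \<in> carr (UE A0)"
  by (simp add: UE_def quotientI)

lemma filt_iff: "rbc A0 `` {t} \<in> filt A0 n \<longleftrightarrow> Fd n t"
  unfolding filt_def Fd_def using cls_carr by (auto simp: E_def)

lemma fb_iff: "rbc A0 `` {t} \<in> filt_below A0 n \<longleftrightarrow> Ld n t"
  unfolding filt_below_def Ld_def by (simp add: filt_iff UE_def cls_eq)

lemma reps_iff: "f \<in> gr_reps A0 \<longleftrightarrow> (\<forall>n. Fd n (f n)) \<and> finite {n. \<not> Ld n (f n)}"
  unfolding gr_reps_def by (simp add: filt_iff fb_iff)

lemma rel_iff: "(f, g) \<in> gr_rel A0 \<longleftrightarrow> f \<in> gr_reps A0 \<and> g \<in> gr_reps A0 \<and> (\<forall>n. D n (f n) (g n))"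
  unfolding gr_rel_def by (simp add: fb_iff D_def)

lemma equiv_gr: "equiv (gr_reps A0) (gr_rel (A0::('k::field, nat \<Rightarrow> 'k) prealg))"
  by (rule equivI) (auto simp: refl_on_def sym_def trans_def rel_iff intro: D_refl D_sym D_trans)

lemma rep_rel: assumes "f \<in> gr_reps A0" shows "(f, rep (gr_rel A0 `` {f})) \<in> gr_rel A0"
proof -
  have "f \<in> gr_rel A0 `` {f}" using assms by (simp add: rel_iff D_refl)
  then have "rep (gr_rel A0 `` {f}) \<in> gr_rel A0 `` {f}" unfolding rep_def by (rule someI[of "\<lambda>x. x \<in> gr_rel A0 `` {f}"])
  then show ?thesis by simp
qed

lemma rep_D: "f \<in> gr_reps A0 \<Longrightarrow> D n (rep (gr_rel A0 `` {f}) n) (f n)"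
  using rep_rel[of f] by (simp add: rel_iff D_sym)

lemma rep_reps: "f \<in> gr_reps A0 \<Longrightarrow> rep (gr_rel A0 `` {f}) \<in> gr_reps A0"
  using rep_rel[of f] by (simp add: rel_iff)

lemma rel_intro: assumes "h \<in> gr_reps A0" "\<And>m. D m (p m) (h m)" shows "(p, h) \<in> gr_rel A0"
proof -
  have "Fd m (p m)" for m using assms by (meson D_Fd reps_iff)
  moreover have "{n. \<not> Ld n (p n)} \<subseteq> {n. \<not> Ld n (h n)}" using assms D_Ld by blast
  then have "finite {n. \<not> Ld n (p n)}" using assms(1) finite_subset reps_iff by blast
  ultimately show ?thesis using assms by (simp add: rel_iff reps_iff)
qed

lemma class_eq: "(p, h) \<in> gr_rel A0 \<Longrightarrow> gr_rel A0 `` {p} = gr_rel A0 `` {h}"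
  by (rule equiv_class_eq[OF equiv_gr])

lemma class_carr: "f \<in> gr_reps A0 \<Longrightarrow> gr_rel A0 `` {f} \<in> carr (GR A0)"
  by (simp add: GR_def quotientI)

definition hs :: "nat \<Rightarrow> ('k::field, nat \<Rightarrow> 'k) tm \<Rightarrow> nat \<Rightarrow> ('k, nat \<Rightarrow> 'k) tm" where
  "hs n t = (\<lambda>m. if m = n then t else Z)"

lemma hs_reps: assumes "Fd n t" shows "hs n t \<in> gr_reps A0"
proof -
  have "{m. \<not> Ld m (hs n t m)} \<subseteq> {n}" by (auto simp: hs_def Ld_Z)
  then have "finite {m. \<not> Ld m (hs n t m)}" by (rule finite_subset) simp
  then show ?thesis using assms by (simp add: reps_iff hs_def Fd_Z)
qed

lemma pls_cls:
  assumes "f \<in> gr_reps A0" "g \<in> gr_reps A0" "h \<in> gr_reps A0" "\<And>m. D m (Pl (f m) (g m)) (h m)"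
  shows "pls (GR A0) (gr_rel A0 `` {f}) (gr_rel A0 `` {g}) = gr_rel A0 `` {h}"
proof -
  let ?f = "rep (gr_rel A0 `` {f})" and ?g = "rep (gr_rel A0 `` {g})"
  have "D m (Pl (?f m) (?g m)) (h m)" for m
    using D_trans[OF D_Pl[OF rep_D[OF assms(1)] rep_D[OF assms(2)]] assms(4)] .
  then have "((\<lambda>m. Pl (?f m) (?g m)), h) \<in> gr_rel A0" by (rule rel_intro[OF assms(3)])
  then show ?thesis by (simp add: GR_def class_eq)
qed

lemma scl_cls:
  assumes "f \<in> gr_reps A0" "h \<in> gr_reps A0" "\<And>m. D m (Sc c (f m)) (h m)"
  shows "scl (GR A0) c (gr_rel A0 `` {f}) = gr_rel A0 `` {h}"
proof -
  let ?f = "rep (gr_rel A0 `` {f})"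
  have "D m (Sc c (?f m)) (h m)" for m
    using D_trans[OF D_Sc[OF rep_D[OF assms(1)]] assms(3)] .
  then have "((\<lambda>m. Sc c (?f m)), h) \<in> gr_rel A0" by (rule rel_intro[OF assms(2)])
  then show ?thesis by (simp add: GR_def class_eq)
qed

lemma rbo_cls:
  assumes "f \<in> gr_reps A0" "h \<in> gr_reps A0" "\<And>m. D m (Rt (f m)) (h m)"
  shows "rbo (GR A0) (gr_rel A0 `` {f}) = gr_rel A0 `` {h}"
proof -
  let ?f = "rep (gr_rel A0 `` {f})"
  have "D m (Rt (?f m)) (h m)" for m
    using D_trans[OF D_Rt[OF rep_D[OF assms(1)]] assms(3)] .
  then have "((\<lambda>m. Rt (?f m)), h) \<in> gr_rel A0" by (rule rel_intro[OF assms(2)])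
  then show ?thesis by (simp add: GR_def class_eq)
qed

lemma sumt_Cons: "sumt (x # xs) = Pl x (sumt xs)" by (simp add: sumt_def)
lemma sumt_Nil: "sumt [] = Z" by (simp add: sumt_def)

lemma D_sumt: "(\<And>k. k \<in> set ks \<Longrightarrow> D m (a k) (b k)) \<Longrightarrow> D m (sumt (map a ks)) (sumt (map b ks))"
  by (induction ks) (auto simp: sumt_Cons sumt_Nil D_refl intro: D_Pl)

lemma sumt_single:
  "distinct ks \<Longrightarrow> (\<And>k. k \<in> set ks \<Longrightarrow> k \<noteq> i \<Longrightarrow> E (h k) Z) \<Longrightarrow>
   E (sumt (map h ks)) (if i \<in> set ks then h i else Z)"
proof (induction ks)
  case Nil then show ?case by (simp add: sumt_Nil)
next
  case (Cons k ks)
  then have IH: "E (sumt (map h ks)) (if i \<in> set ks then h i else Z)" by auto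
  show ?case
  proof (cases "k = i")
    case True
    then have "i \<notin> set ks" using Cons by auto
    then have "E (sumt (map h (k # ks))) (Pl (h i) Z)" using IH True
      by (simp add: sumt_Cons E_Pl)
    also have "E \<dots> (h i)" by (rule E_zero_r)
    finally show ?thesis using True by simp
  next
    case False
    then have "E (h k) Z" using Cons by auto
    then have "E (sumt (map h (k # ks))) (Pl Z (if i \<in> set ks then h i else Z))" using IH
      by (simp add: sumt_Cons E_Pl)
    also have "E \<dots> (if i \<in> set ks then h i else Z)" by (rule E_zero)
    finally show ?thesis using False by simp
  qed
qed

lemma mul_cls:
  assumes s: "Fd i s" and u: "Fd j u"
  shows "mul (GR A0) (gr_rel A0 `` {hs i s}) (gr_rel A0 `` {hs j u}) = gr_rel A0 `` {hs (i+j) (Mu s u)}"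
proof -
  let ?f = "rep (gr_rel A0 `` {hs i s})" and ?g = "rep (gr_rel A0 `` {hs j u})"
  have fi: "hs i s \<in> gr_reps A0" and gj: "hs j u \<in> gr_reps A0" using s u by (simp_all add: hs_reps)
  have fr: "?f \<in> gr_reps A0" and gr: "?g \<in> gr_reps A0" using fi gj by (simp_all add: rep_reps)
  have tgt: "hs (i+j) (Mu s u) \<in> gr_reps A0" by (rule hs_reps[OF Fd_Mu[OF s u]])
  have key: "D m (sumt (map (\<lambda>k. Mu (?f k) (?g (m - k))) [0..<Suc m])) (hs (i+j) (Mu s u) m)" for m
  proof -
    have "D m (sumt (map (\<lambda>k. Mu (?f k) (?g (m - k))) [0..<Suc m]))
              (sumt (map (\<lambda>k. Mu (hs i s k) (hs j u (m - k))) [0..<Suc m]))"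
    proof (rule D_sumt)
      fix k assume "k \<in> set [0..<Suc m]"
      then have km: "k + (m - k) = m" by auto
      have "D (k + (m - k)) (Mu (?f k) (?g (m - k))) (Mu (hs i s k) (hs j u (m - k)))"
        apply (rule D_Mu)
        using rep_D[OF fi] gr fi rep_D[OF gj] by (auto simp: reps_iff)
      then show "D m (Mu (?f k) (?g (m - k))) (Mu (hs i s k) (hs j u (m - k)))" using km by simp
    qed
    moreover have "E (sumt (map (\<lambda>k. Mu (hs i s k) (hs j u (m - k))) [0..<Suc m])) (hs (i+j) (Mu s u) m)"
    proof -
      have "E (sumt (map (\<lambda>k. Mu (hs i s k) (hs j u (m - k))) [0..<Suc m]))
              (if i \<in> set [0..<Suc m] then Mu (hs i s i) (hs j u (m - i)) else Z)"
        by (rule sumt_single) (auto simp: hs_def E_MuZl)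
      also have "E \<dots> (hs (i+j) (Mu s u) m)"
        by (auto simp: hs_def E_MuZr)
      finally show ?thesis .
    qed
    ultimately show ?thesis using D_trans D_of_E by blast
  qed
  have "((\<lambda>m. sumt (map (\<lambda>k. Mu (?f k) (?g (m - k))) [0..<Suc m])), hs (i+j) (Mu s u)) \<in> gr_rel A0"
    by (rule rel_intro[OF tgt key])
  then show ?thesis by (simp add: GR_def class_eq)
qed



lemma carr_GR: "carr (GR A0) = gr_reps A0 // gr_rel A0" by (simp add: GR_def)

lemma psi_zero:
  fixes \<psi> :: "(nat \<Rightarrow> ('k::field, nat \<Rightarrow> 'k) tm) set \<Rightarrow> 'k"
  assumes pl: "\<And>X Y. X \<in> carr (GR A0) \<Longrightarrow> Y \<in> carr (GR A0) \<Longrightarrow> \<psi> (pls (GR A0) X Y) = \<psi> X + \<psi> Y"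
    and sc: "\<And>c X. X \<in> carr (GR A0) \<Longrightarrow> \<psi> (scl (GR A0) c X) = c * \<psi> X"
    and mu: "\<And>X Y. X \<in> carr (GR A0) \<Longrightarrow> Y \<in> carr (GR A0) \<Longrightarrow> \<psi> (mul (GR A0) X Y) = \<psi> X * \<psi> Y"
    and rt: "\<And>X. X \<in> carr (GR A0) \<Longrightarrow> \<psi> (rbo (GR A0) X) = 0"
    and X: "X \<in> carr (GR A0)"
  shows "\<psi> X = 0"
proof -
  define z :: "nat \<Rightarrow> ('k, nat \<Rightarrow> 'k) tm" where "z = (\<lambda>m. Z)"
  have zr: "z \<in> gr_reps A0" by (simp add: reps_iff z_def Fd_Z Ld_Z)
  have low: "\<psi> (gr_rel A0 `` {h}) = 0" if h: "h \<in> gr_reps A0" "\<And>m. Ld m (h m)" for h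
  proof -
    have "rbo (GR A0) (gr_rel A0 `` {z}) = gr_rel A0 `` {h}"
      by (rule rbo_cls[OF zr h(1)]) (simp add: z_def D_ZL[OF E_RtZ h(2)])
    then show ?thesis using rt[OF class_carr[OF zr]] by simp
  qed
  have hs0: "\<psi> (gr_rel A0 `` {hs n t}) = 0" if "deg t \<le> n" for t n
    using that
  proof (induction t arbitrary: n)
    case (G x)
    have hr: "hs n (G x) \<in> gr_reps A0" by (rule hs_reps[OF Fd_deg[OF G]])
    show ?case
    proof (cases "n = 1")
      case True
      have F1: "Fd 1 (G x)" by (rule Fd_deg) simp
      have "mul (GR A0) (gr_rel A0 `` {hs 1 (G x)}) (gr_rel A0 `` {hs 1 (G x)}) = gr_rel A0 `` {hs (1+1) (Mu (G x) (G x))}"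
        using mul_cls[OF F1 F1] by (simp only:)
      moreover have "\<psi> (gr_rel A0 `` {hs (1+1) (Mu (G x) (G x))}) = 0"
        by (rule low[OF hs_reps[OF Fd_Mu[OF F1 F1]]]) (auto simp: hs_def Ld_Z intro!: Ld_ofZ E_GG)
      ultimately have "\<psi> (gr_rel A0 `` {hs 1 (G x)}) * \<psi> (gr_rel A0 `` {hs 1 (G x)}) = 0"
        using mu[OF class_carr class_carr, OF hr hr] True by simp
      then show ?thesis using True by simp
    next
      case False
      then have "n \<ge> 2" using G by simp
      then have "Ld n (G x)" by (simp add: Ld_def Fd_deg)
      then show ?thesis by (intro low hr) (simp add: hs_def Ld_Z)
    qed
  next
    case Z
    show ?case by (rule low[OF hs_reps[OF Fd_Z]]) (auto simp: hs_def Ld_Z)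
  next
    case (Pl s u)
    have rs: "hs n s \<in> gr_reps A0" and ru: "hs n u \<in> gr_reps A0" and rp: "hs n (Pl s u) \<in> gr_reps A0"
      using Pl.prems by (auto intro!: hs_reps Fd_deg)
    have "pls (GR A0) (gr_rel A0 `` {hs n s}) (gr_rel A0 `` {hs n u}) = gr_rel A0 `` {hs n (Pl s u)}"
      by (rule pls_cls[OF rs ru rp]) (auto simp: hs_def D_refl intro: D_of_E E_zero)
    then show ?case using pl[OF class_carr class_carr, OF rs ru] Pl by simp
  next
    case (Sc c s)
    have rs: "hs n s \<in> gr_reps A0" and rp: "hs n (Sc c s) \<in> gr_reps A0"
      using Sc.prems by (auto intro!: hs_reps Fd_deg)
    have "scl (GR A0) c (gr_rel A0 `` {hs n s}) = gr_rel A0 `` {hs n (Sc c s)}"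
      by (rule scl_cls[OF rs rp]) (auto simp: hs_def D_refl intro: D_of_E E_ScZ)
    then show ?case using sc[of "gr_rel A0 `` {hs n s}" c] class_carr[OF rs] Sc by simp
  next
    case (Mu s u)
    define i where "i = deg s"
    define j where "j = n - i"
    have ij: "i + j = n" and Fs: "Fd i s" and Fu: "Fd j u" using Mu.prems by (auto simp: i_def j_def intro!: Fd_deg)
    have rs: "hs i s \<in> gr_reps A0" and ru: "hs j u \<in> gr_reps A0" using Fs Fu by (simp_all add: hs_reps)
    have "mul (GR A0) (gr_rel A0 `` {hs i s}) (gr_rel A0 `` {hs j u}) = gr_rel A0 `` {hs n (Mu s u)}"
      using mul_cls[OF Fs Fu] ij by simp
    moreover have "\<psi> (gr_rel A0 `` {hs i s}) = 0" using Mu.IH(1)[of i] by (simp add: i_def)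
    ultimately show ?case using mu[OF class_carr class_carr, OF rs ru] by simp
  next
    case (Rt s)
    have rs: "hs n s \<in> gr_reps A0" and rp: "hs n (Rt s) \<in> gr_reps A0"
      using Rt.prems by (auto intro!: hs_reps Fd_deg)
    have "rbo (GR A0) (gr_rel A0 `` {hs n s}) = gr_rel A0 `` {hs n (Rt s)}"
      by (rule rbo_cls[OF rs rp]) (auto simp: hs_def D_refl intro: D_of_E E_RtZ)
    then show ?case using rt[OF class_carr, OF rs] by simp
  qed
  have hsF: "\<psi> (gr_rel A0 `` {hs n t}) = 0" if Fnt: "Fd n t" for t n
  proof -
    obtain t' where t': "E t t'" "deg t' \<le> n" using Fnt unfolding Fd_def by blast
    have "(hs n t, hs n t') \<in> gr_rel A0"
      by (rule rel_intro[OF hs_reps[OF Fd_deg[OF t'(2)]]]) (auto simp: hs_def D_refl D_of_E t')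
    then show ?thesis using hs0[OF t'(2)] by (simp add: class_eq)
  qed
  have main: "\<forall>f :: nat \<Rightarrow> ('k, nat \<Rightarrow> 'k) tm. f \<in> gr_reps A0 \<longrightarrow> (\<forall>m\<ge>N. Ld m (f m)) \<longrightarrow> \<psi> (gr_rel A0 `` {f}) = 0" for N
  proof (induction N)
    case 0
    then show ?case using low by auto
  next
    case (Suc N)
    show ?case
    proof (intro allI impI)
      fix f :: "nat \<Rightarrow> ('k, nat \<Rightarrow> 'k) tm" assume f: "f \<in> gr_reps A0" and hi: "\<forall>m\<ge>Suc N. Ld m (f m)"
      define f' where "f' = f(N := Z)"
      have FN: "Fd N (f N)" using f by (simp add: reps_iff)
      have f'r: "f' \<in> gr_reps A0"
      proof -
        have "{n. \<not> Ld n (f' n)} \<subseteq> {n. \<not> Ld n (f n)}" by (auto simp: f'_def Ld_Z)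
        moreover have "finite {n. \<not> Ld n (f n)}" using f by (simp add: reps_iff)
        ultimately have "finite {n. \<not> Ld n (f' n)}" by (rule finite_subset)
        moreover have "\<forall>n. Fd n (f' n)" using f by (auto simp: reps_iff f'_def Fd_Z)
        ultimately show ?thesis by (simp add: reps_iff)
      qed
      have "\<forall>m\<ge>N. Ld m (f' m)" using hi by (auto simp: f'_def Ld_Z Suc_le_eq)
      then have z': "\<psi> (gr_rel A0 `` {f'}) = 0" using Suc.IH f'r by blast
      have hr: "hs N (f N) \<in> gr_reps A0" by (rule hs_reps[OF FN])
      have "pls (GR A0) (gr_rel A0 `` {hs N (f N)}) (gr_rel A0 `` {f'}) = gr_rel A0 `` {f}"
        by (rule pls_cls[OF hr f'r f]) (auto simp: hs_def f'_def intro: D_of_E E_zero E_zero_r)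
      then show "\<psi> (gr_rel A0 `` {f}) = 0"
        using pl[OF class_carr class_carr, OF hr f'r] z' hsF[OF FN] by simp
    qed
  qed
  obtain f where f: "f \<in> gr_reps A0" and Xf: "X = gr_rel A0 `` {f}" using X by (auto simp: carr_GR elim: quotientE)
  then have "finite {n. \<not> Ld n (f n)}" by (simp add: reps_iff)
  then obtain N where "\<forall>n\<in>{n. \<not> Ld n (f n)}. n < N" by (auto simp: finite_nat_set_iff_bounded)
  then have "\<forall>m\<ge>N. Ld m (f m)" by force
  then show ?thesis using main f Xf by blast
qed



fun ev :: "('k::field, nat \<Rightarrow> 'k) tm \<Rightarrow> 'k" where
  "ev (G x) = x 0"
| "ev Z = 0"
| "ev (Pl s t) = ev s + ev t"
| "ev (Sc c t) = c * ev t"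
| "ev (Mu s t) = ev s * ev t"
| "ev (Rt t) = 0"

lemma carr_AbA0[simp]: "carr (Ab A0) = UNIV" by (simp add: Ab_def A0_def)

lemma terms_AbA0[simp]: "t \<in> terms (Ab (A0::('k::field, nat \<Rightarrow> 'k) prealg))"
  by (induction t) (auto intro: terms.intros)

lemma ev_rbc: "(s, t) \<in> rbc (Ab (A0::('k::field, nat \<Rightarrow> 'k) prealg)) \<Longrightarrow> ev s = ev t"
  by (induction rule: rbc.induct) (simp_all add: Ab_def A0_def algebra_simps)

definition eps :: "('k::field, ('k, nat \<Rightarrow> 'k) tm set) rbalg \<Rightarrow> ('k, nat \<Rightarrow> 'k) tm set \<Rightarrow> 'k" where
  "eps B X = ev (rep X)"

lemma eps_cls: "eps B (rbc (Ab (A0::('k::field, nat \<Rightarrow> 'k) prealg)) `` {t}) = ev t"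
proof -
  have "t \<in> rbc (Ab A0) `` {t}" by (simp add: rbc.refl)
  then have "rep (rbc (Ab A0) `` {t}) \<in> rbc (Ab A0) `` {t}"
    unfolding rep_def by (rule someI[of "\<lambda>x. x \<in> rbc (Ab A0) `` {t}"])
  then show ?thesis by (simp add: eps_def ev_rbc)
qed

lemma preas_A0: "is_preas (A0::('k::field, nat \<Rightarrow> 'k) prealg)"
  unfolding is_preas_def vspace_def bilinear_on_def
  by (auto simp: A0_def fun_eq_iff algebra_simps intro: exI[of _ "\<lambda>n. - x n" for x])



lemma UE_ops:
  "pls (UE B) P Q = rbc B `` {Pl (rep P) (rep Q)}"
  "scl (UE B) c P = rbc B `` {Sc c (rep P)}"
  "mul (UE B) P Q = rbc B `` {Mu (rep P) (rep Q)}"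
  "rbo (UE B) P = rbc B `` {Rt (rep P)}"
  by (simp_all add: UE_def)

theorem corollary1:
  shows "\<not> PBW_RBAs_preAs TYPE(('k::field, nat \<Rightarrow> 'k) prealg)"
proof
  assume "PBW_RBAs_preAs TYPE(('k::field, nat \<Rightarrow> 'k) prealg)"
  then have "rb_iso (GR A0) (UE (Ab (A0::('k, nat \<Rightarrow> 'k) prealg)))"
    using preas_A0 unfolding PBW_RBAs_preAs_def by blast
  then obtain \<phi> where bij: "bij_betw \<phi> (carr (GR (A0::('k, nat \<Rightarrow> 'k) prealg))) (carr (UE (Ab (A0::('k, nat \<Rightarrow> 'k) prealg))))"
    and hpl: "\<forall>x\<in>carr (GR A0). \<forall>y\<in>carr (GR A0). \<phi> (pls (GR A0) x y) = pls (UE (Ab A0)) (\<phi> x) (\<phi> y)"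
    and hsc: "\<forall>c. \<forall>x\<in>carr (GR A0). \<phi> (scl (GR A0) c x) = scl (UE (Ab A0)) c (\<phi> x)"
    and hmu: "\<forall>x\<in>carr (GR A0). \<forall>y\<in>carr (GR A0). \<phi> (mul (GR A0) x y) = mul (UE (Ab A0)) (\<phi> x) (\<phi> y)"
    and hrt: "\<forall>x\<in>carr (GR A0). \<phi> (rbo (GR A0) x) = rbo (UE (Ab A0)) (\<phi> x)"
    unfolding rb_iso_def by blast
  define \<psi> where "\<psi> X = eps undefined (\<phi> X)" for X
  have ps: "\<psi> X = ev (rep (\<phi> X))" for X by (simp add: \<psi>_def eps_def)
  have "\<psi> W = 0" if W: "W \<in> carr (GR A0)" for W
  proof (rule psi_zero[OF _ _ _ _ W])
    fix X Y :: "(nat \<Rightarrow> ('k, nat \<Rightarrow> 'k) tm) set" assume asm: "X \<in> carr (GR A0)" "Y \<in> carr (GR A0)"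
    then show "\<psi> (pls (GR A0) X Y) = \<psi> X + \<psi> Y"
      proof -
      have e: "\<phi> (pls (GR A0) X Y) = rbc (Ab A0) `` {Pl (rep (\<phi> X)) (rep (\<phi> Y))}" using hpl[rule_format, OF asm] by (simp only: UE_ops)
      show ?thesis by (simp only: ps e eps_cls[unfolded eps_def] ev.simps)
    qed
  next
    fix c and X :: "(nat \<Rightarrow> ('k, nat \<Rightarrow> 'k) tm) set" assume asm: "X \<in> carr (GR A0)"
    then show "\<psi> (scl (GR A0) c X) = c * \<psi> X"
      proof -
      have e: "\<phi> (scl (GR A0) c X) = rbc (Ab A0) `` {Sc c (rep (\<phi> X))}" using hsc[rule_format, OF asm] by (simp only: UE_ops)
      show ?thesis by (simp only: ps e eps_cls[unfolded eps_def] ev.simps)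
    qed
  next
    fix X Y :: "(nat \<Rightarrow> ('k, nat \<Rightarrow> 'k) tm) set" assume asm: "X \<in> carr (GR A0)" "Y \<in> carr (GR A0)"
    then show "\<psi> (mul (GR A0) X Y) = \<psi> X * \<psi> Y"
      proof -
      have e: "\<phi> (mul (GR A0) X Y) = rbc (Ab A0) `` {Mu (rep (\<phi> X)) (rep (\<phi> Y))}" using hmu[rule_format, OF asm] by (simp only: UE_ops)
      show ?thesis by (simp only: ps e eps_cls[unfolded eps_def] ev.simps)
    qed
  next
    fix X :: "(nat \<Rightarrow> ('k, nat \<Rightarrow> 'k) tm) set" assume asm: "X \<in> carr (GR A0)"
    then show "\<psi> (rbo (GR A0) X) = 0"
      proof -
      have e: "\<phi> (rbo (GR A0) X) = rbc (Ab A0) `` {Rt (rep (\<phi> X))}" using hrt[rule_format, OF asm] by (simp only: UE_ops)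
      show ?thesis by (simp only: ps e eps_cls[unfolded eps_def] ev.simps)
    qed
  qed
  moreover
  define X0 where "X0 = rbc (Ab (A0::('k, nat \<Rightarrow> 'k) prealg)) `` {G (\<lambda>n. 1)}"
  have "X0 \<in> carr (UE (Ab A0))" by (simp add: X0_def UE_def quotientI)
  then have "X0 \<in> \<phi> ` carr (GR A0)" using bij_betw_imp_surj_on[OF bij] by simp
  then obtain Y where Y: "Y \<in> carr (GR A0)" "\<phi> Y = X0" by (metis imageE)
  moreover have "\<psi> Y = 1" using Y by (simp only: ps X0_def eps_cls[unfolded eps_def] ev.simps)
  ultimately show False by simp
qed


end
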